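(* Let $P$ be a finite poset and $f\colon\mathcal{J}(P)\to\mathbb{R}$ a real-valued statistic. Suppose that, viewing $f$ as a statistic with values in $\mathbb{R}(q)$, we have $f=c(q)+\sum_{p\in P}c_p(q)T_p^q$ for some rational functions $c(q),c_p(q)\in\mathbb{R}(q)$. Then none of $c(q)$, $c_p(q)$ has a singularity at any nonnegative real number, and for every real $z\ge0$ we have $f=c(z)+\sum_{p\in P}c_p(z)\,T_p^q|_{z}$, where $T_p^q|_z=T_p^+-zT_p^-$.
   Context: $\mathcal{J}(P)$ is the set of order ideals of $P$. For $p\in P$, $I\in\mathcal{J}(P)$: $T_p^+(I)=1$ if $p$ is a minimal element of $P\setminus I$, else $0$; $T_p^-(I)=1$ if $p$ is a maximal element of $I$, else $0$. $T_p^q\coloneqq T_p^+-qT_p^-$ is a statistic $\mathcal{J}(P)\to\mathbb{R}(q)$, where $q$ is an indeterminate and $\mathbb{R}(q)$ the field of rational functions. *)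

theory Defs
  imports Main "HOL-Computational_Algebra.Polynomial" "HOL-Computational_Algebra.Fraction_Field"
begin

text \<open>The finite poset P is a finite subset of a type with a partial order,
  carrying the induced order.\<close>

definition order_ideals :: "'a::order set \<Rightarrow> 'a set set" where
  "order_ideals P = {I. I \<subseteq> P \<and> (\<forall>x\<in>I. \<forall>y\<in>P. y \<le> x \<longrightarrow> y \<in> I)}"

definition Tplus :: "'a::order set \<Rightarrow> 'a \<Rightarrow> 'a set \<Rightarrow> real" where
  "Tplus P p I = (if p \<in> P - I \<and> \<not> (\<exists>y\<in>P - I. y < p) then 1 else 0)"

definition Tminus :: "'a::order set \<Rightarrow> 'a \<Rightarrow> 'a set \<Rightarrow> real" where
  "Tminus P p I = (if p \<in> I \<and> \<not> (\<exists>y\<in>I. p < y) then 1 else 0)"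

type_synonym ratfun = "real poly fract"

definition qvar :: ratfun where
  "qvar = Fract [:0, 1:] 1"

definition rconst :: "real \<Rightarrow> ratfun" where
  "rconst x = Fract [:x:] 1"

definition Tq :: "'a::order set \<Rightarrow> 'a \<Rightarrow> 'a set \<Rightarrow> ratfun" where
  "Tq P p I = rconst (Tplus P p I) - qvar * rconst (Tminus P p I)"

definition regular_at :: "ratfun \<Rightarrow> real \<Rightarrow> bool" where
  "regular_at c z \<longleftrightarrow> (\<exists>n d. c = Fract n d \<and> poly d z \<noteq> 0)"

definition eval_ratfun :: "ratfun \<Rightarrow> real \<Rightarrow> real" where
  "eval_ratfun c z = (THE v. \<exists>n d. c = Fract n d \<and> poly d z \<noteq> 0 \<and> v = poly n z / poly d z)"

end

theory Submission
  imports Defs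
begin

definition pp :: "real poly \<Rightarrow> ratfun" where "pp x = Fract x 1"

lemma pp_add: "pp (a + b) = pp a + pp b" by (simp add: pp_def)
lemma pp_mult: "pp (a * b) = pp a * pp b" by (simp add: pp_def)
lemma pp_0: "pp 0 = 0" by (simp add: pp_def Zero_fract_def)
lemma pp_sum: "pp (\<Sum>i\<in>A. g i) = (\<Sum>i\<in>A. pp (g i))"
  by (induction A rule: infinite_finite_induct) (auto simp: pp_add pp_0)
lemma pp_pow: "qvar ^ k = pp ([:0,1:] ^ k)"
  by (induction k) (auto simp: pp_mult qvar_def pp_def One_fract_def)
lemma rconst_pp: "rconst x = pp [:x:]" by (simp add: rconst_def pp_def)

lemma eval_eq:
  assumes "x = Fract n d" "poly d z \<noteq> 0"
  shows "eval_ratfun x z = poly n z / poly d z"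
  unfolding eval_ratfun_def
proof (rule the_equality)
  show "\<exists>n' d'. x = Fract n' d' \<and> poly d' z \<noteq> 0 \<and> poly n z / poly d z = poly n' z / poly d' z"
    using assms by blast
next
  fix v assume "\<exists>n' d'. x = Fract n' d' \<and> poly d' z \<noteq> 0 \<and> v = poly n' z / poly d' z"
  then obtain n' d' where h: "x = Fract n' d'" "poly d' z \<noteq> 0" "v = poly n' z / poly d' z" by blast
  have "d \<noteq> 0" "d' \<noteq> 0" using assms h by auto
  then have "n * d' = n' * d" using assms h eq_fract by metis
  then have "poly n z * poly d' z = poly n' z * poly d z" by (metis poly_mult)
  then have "poly n z / poly d z = poly n' z / poly d' z"
    using assms(2) h(2) by (simp add: frac_eq_eq)
  then show "v = poly n z / poly d z" using h(3) by simp
qed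

lemma reg_add:
  assumes "regular_at x z" "regular_at y z"
  shows "regular_at (x + y) z \<and> eval_ratfun (x + y) z = eval_ratfun x z + eval_ratfun y z"
proof -
  obtain n d where a: "x = Fract n d" "poly d z \<noteq> 0" using assms(1) regular_at_def by blast
  obtain n' d' where b: "y = Fract n' d'" "poly d' z \<noteq> 0" using assms(2) regular_at_def by blast
  have "d \<noteq> 0" "d' \<noteq> 0" using a b by auto
  then have e: "x + y = Fract (n * d' + n' * d) (d * d')" unfolding a b by (rule add_fract)
  have p: "poly (d * d') z \<noteq> 0" using a b by simp
  have r: "regular_at (x + y) z" unfolding regular_at_def using e p by blast
  have "eval_ratfun (x + y) z = poly (n * d' + n' * d) z / poly (d * d') z" by (rule eval_eq[OF e p])
  also have "\<dots> = poly n z / poly d z + poly n' z / poly d' z" using a b by (simp add: field_simps)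
  also have "\<dots> = eval_ratfun x z + eval_ratfun y z" using eval_eq[OF a] eval_eq[OF b] by simp
  finally show ?thesis using r by simp
qed

lemma reg_mult:
  assumes "regular_at x z" "regular_at y z"
  shows "regular_at (x * y) z \<and> eval_ratfun (x * y) z = eval_ratfun x z * eval_ratfun y z"
proof -
  obtain n d where a: "x = Fract n d" "poly d z \<noteq> 0" using assms(1) regular_at_def by blast
  obtain n' d' where b: "y = Fract n' d'" "poly d' z \<noteq> 0" using assms(2) regular_at_def by blast
  have e: "x * y = Fract (n * n') (d * d')" unfolding a b by (rule mult_fract)
  have p: "poly (d * d') z \<noteq> 0" using a b by simp
  have r: "regular_at (x * y) z" unfolding regular_at_def using e p by blast
  have "eval_ratfun (x * y) z = poly (n * n') z / poly (d * d') z" by (rule eval_eq[OF e p])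
  also have "\<dots> = (poly n z / poly d z) * (poly n' z / poly d' z)" by simp
  also have "\<dots> = eval_ratfun x z * eval_ratfun y z" using eval_eq[OF a] eval_eq[OF b] by simp
  finally show ?thesis using r by simp
qed

lemma reg_pp: "regular_at (pp a) z \<and> eval_ratfun (pp a) z = poly a z"
proof -
  have "regular_at (pp a) z" unfolding regular_at_def pp_def
    by (rule exI[of _ a], rule exI[of _ 1]) simp
  then show ?thesis using eval_eq[of "pp a" a 1 z] unfolding pp_def by auto
qed

lemma reg_diff:
  assumes "regular_at x z" "regular_at y z"
  shows "regular_at (x - y) z \<and> eval_ratfun (x - y) z = eval_ratfun x z - eval_ratfun y z"
proof -
  have m1: "[:-1:] = (- 1 :: real poly)" by (simp add: one_pCons)
  have m: "- 1 = pp [:-1:]" unfolding m1 by (simp add: pp_def One_fract_def)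
  have e: "x - y = x + pp [:-1:] * y" by (simp flip: m)
  have r1: "regular_at (pp [:-1:] * y) z \<and> eval_ratfun (pp [:-1:] * y) z = - eval_ratfun y z"
    using reg_mult[OF conjunct1[OF reg_pp] assms(2), of "[:-1:]"] reg_pp[of "[:-1:]" z] by simp
  have r2: "regular_at (x + pp [:-1:] * y) z \<and> eval_ratfun (x + pp [:-1:] * y) z = eval_ratfun x z + eval_ratfun (pp [:-1:] * y) z"
    using reg_add[OF assms(1) conjunct1[OF r1]] .
  show ?thesis unfolding e using r1 r2 by simp
qed

lemma reg_sum:
  assumes "\<forall>i\<in>A. regular_at (g i) z"
  shows "regular_at (\<Sum>i\<in>A. g i) z \<and> eval_ratfun (\<Sum>i\<in>A. g i) z = (\<Sum>i\<in>A. eval_ratfun (g i) z)"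
  using assms
proof (induction A rule: infinite_finite_induct)
  case (infinite A)
  then show ?case using reg_pp[of 0 z] by (simp add: pp_0)
next
  case empty
  then show ?case using reg_pp[of 0 z] by (simp add: pp_0)
next
  case (insert x F)
  then show ?case using reg_add[of "g x" z "sum g F"] by simp
qed

lemma reg_div:
  assumes "x * pp w = y" "regular_at y z" "poly w z \<noteq> 0"
  shows "regular_at x z"
proof -
  obtain n d where a: "y = Fract n d" "poly d z \<noteq> 0" using assms(2) regular_at_def by blast
  have w: "w \<noteq> 0" using assms by auto
  have pw: "pp w \<noteq> 0" using w by (simp add: pp_def Zero_fract_def eq_fract)
  have "x = y / pp w" using assms(1) pw by (simp add: field_simps)
  also have "\<dots> = Fract n (d * w)" using a w by (simp add: pp_def)
  finally have e: "x = Fract n (d * w)" .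
  have "poly (d * w) z \<noteq> 0" using a assms(3) by simp
  then show ?thesis unfolding regular_at_def using e by blast
qed
lemma rconst01: "rconst 0 = 0" "rconst 1 = 1"
  by (simp_all add: rconst_def Zero_fract_def One_fract_def one_pCons)

lemma Tq_alt: "Tq P r I = (if r \<in> P - I \<and> \<not> (\<exists>y\<in>P - I. y < r) then 1 else 0)
     - (if r \<in> I \<and> \<not> (\<exists>y\<in>I. r < y) then qvar else 0)"
  by (simp add: Tq_def Tplus_def Tminus_def rconst01)

lemma finite_ideals: "finite P \<Longrightarrow> finite (order_ideals P)"
  unfolding order_ideals_def by (rule finite_subset[of _ "Pow P"]) auto

lemma cancel:
  fixes P :: "'a::order set"
  assumes fin: "finite P" and U: "U \<in> order_ideals P" and r: "r \<in> U"
  shows "(\<Sum>I\<in>{I \<in> order_ideals P. I \<subseteq> U}. qvar ^ (card U - card I) * Tq P r I) = 0"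
proof -
  let ?A = "{I \<in> order_ideals P. I \<subseteq> U}"
  let ?w = "\<lambda>I. qvar ^ (card U - card I)"
  define Sp where "Sp = {I \<in> ?A. r \<in> P - I \<and> \<not> (\<exists>y\<in>P - I. y < r)}"
  define Sm where "Sm = {I \<in> ?A. r \<in> I \<and> \<not> (\<exists>y\<in>I. r < y)}"
  have finA: "finite ?A" using finite_ideals[OF fin] by simp
  have UP: "U \<subseteq> P" using U by (simp add: order_ideals_def)
  have finU: "finite U" using UP fin finite_subset by blast
  have "(\<Sum>I\<in>?A. ?w I * Tq P r I) = (\<Sum>I\<in>?A. (if I \<in> Sp then ?w I else 0))
        - (\<Sum>I\<in>?A. (if I \<in> Sm then qvar * ?w I else 0))"
    unfolding Tq_alt Sp_def Sm_def sum_subtractf[symmetric]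
    by (rule sum.cong) (auto simp: algebra_simps)
  also have "\<dots> = sum ?w Sp - sum (\<lambda>I. qvar * ?w I) Sm"
    using finA by (simp add: sum.If_cases Sp_def Sm_def Int_absorb1 Int_def)
  finally have s1: "(\<Sum>I\<in>?A. ?w I * Tq P r I) = sum ?w Sp - sum (\<lambda>I. qvar * ?w I) Sm" .
  have "sum ?w Sp = sum (\<lambda>I. qvar * ?w I) Sm"
  proof (rule sum.reindex_bij_witness[of _ "\<lambda>I. I - {r}" "insert r"])
    fix I assume "I \<in> Sp"
    then show "insert r I - {r} = I" by (auto simp: Sp_def)
  next
    fix I assume I: "I \<in> Sp"
    then have IP: "I \<subseteq> P" and Iid: "\<forall>x\<in>I. \<forall>y\<in>P. y \<le> x \<longrightarrow> y \<in> I" and rI: "r \<notin> I"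
      and mn: "\<not> (\<exists>y\<in>P - I. y < r)" and IU: "I \<subseteq> U" and rP: "r \<in> P"
      by (auto simp: Sp_def order_ideals_def)
    have "insert r I \<in> order_ideals P"
      unfolding order_ideals_def using IP Iid mn rP by (auto simp: le_less)
    moreover have "\<not> (\<exists>y\<in>insert r I. r < y)" using Iid rI rP by auto
    ultimately show "insert r I \<in> Sm" using IU r by (auto simp: Sm_def)
  next
    fix J assume "J \<in> Sm"
    then show "insert r (J - {r}) = J" by (auto simp: Sm_def)
  next
    fix J assume J: "J \<in> Sm"
    then have JP: "J \<subseteq> P" and Jid: "\<forall>x\<in>J. \<forall>y\<in>P. y \<le> x \<longrightarrow> y \<in> J" and rJ: "r \<in> J"
      and mx: "\<not> (\<exists>y\<in>J. r < y)" and JU: "J \<subseteq> U"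
      by (auto simp: Sm_def order_ideals_def)
    have "J - {r} \<in> order_ideals P"
      unfolding order_ideals_def using JP Jid mx by (auto simp: less_le)
    moreover have "r \<in> P - (J - {r})" using rJ JP by auto
    moreover have "\<not> (\<exists>y\<in>P - (J - {r}). y < r)" using Jid rJ by auto
    ultimately show "J - {r} \<in> Sp" using JU by (auto simp: Sp_def)
  next
    fix I assume I: "I \<in> Sp"
    then have rI: "r \<notin> I" and IU: "I \<subseteq> U" by (auto simp: Sp_def)
    have finI: "finite I" using IU finU finite_subset by blast
    have "card (insert r I) = Suc (card I)" using rI finI by simp
    moreover have "card (insert r I) \<le> card U" using IU r finU by (intro card_mono) auto
    ultimately have "card U - card I = Suc (card U - card (insert r I))" by simp
    then show "qvar * ?w (insert r I) = ?w I" by simp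
  qed
  then show ?thesis using s1 by simp
qed
lemma weighted:
  fixes P :: "'a::order set" and f :: "'a set \<Rightarrow> real"
  assumes fin: "finite P" and U: "U \<in> order_ideals P"
    and H: "\<forall>I\<in>order_ideals P. rconst (f I) = c + (\<Sum>p\<in>P. cp p * Tq P p I)"
  shows "(\<Sum>I\<in>{I \<in> order_ideals P. I \<subseteq> U}. qvar ^ (card U - card I) * rconst (f I))
       = c * (\<Sum>I\<in>{I \<in> order_ideals P. I \<subseteq> U}. qvar ^ (card U - card I))
         + (\<Sum>r\<in>P - U. cp r * (\<Sum>I\<in>{I \<in> order_ideals P. I \<subseteq> U}. qvar ^ (card U - card I) * Tq P r I))"
proof -
  let ?A = "{I \<in> order_ideals P. I \<subseteq> U}"
  let ?w = "\<lambda>I. qvar ^ (card U - card I)"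
  have UP: "U \<subseteq> P" using U by (simp add: order_ideals_def)
  have "(\<Sum>I\<in>?A. ?w I * rconst (f I)) = (\<Sum>I\<in>?A. ?w I * (c + (\<Sum>p\<in>P. cp p * Tq P p I)))"
    using H by (intro sum.cong) auto
  also have "\<dots> = (\<Sum>I\<in>?A. c * ?w I + (\<Sum>p\<in>P. cp p * (?w I * Tq P p I)))"
    by (intro sum.cong refl) (simp add: distrib_left sum_distrib_left mult_ac)
  also have "\<dots> = c * (\<Sum>I\<in>?A. ?w I) + (\<Sum>I\<in>?A. \<Sum>p\<in>P. cp p * (?w I * Tq P p I))"
    by (simp only: sum.distrib sum_distrib_left)
  also have "(\<Sum>I\<in>?A. \<Sum>p\<in>P. cp p * (?w I * Tq P p I)) = (\<Sum>p\<in>P. cp p * (\<Sum>I\<in>?A. ?w I * Tq P p I))"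
    by (subst sum.swap) (simp add: sum_distrib_left)
  also have "\<dots> = (\<Sum>p\<in>U. cp p * (\<Sum>I\<in>?A. ?w I * Tq P p I)) + (\<Sum>p\<in>P - U. cp p * (\<Sum>I\<in>?A. ?w I * Tq P p I))"
    by (subst sum.subset_diff[OF UP fin]) (rule add.commute)
  also have "(\<Sum>p\<in>U. cp p * (\<Sum>I\<in>?A. ?w I * Tq P p I)) = 0"
    using cancel[OF fin U] by simp
  finally show ?thesis by simp
qed

lemma poly_ge1:
  fixes g :: "'b \<Rightarrow> real poly"
  assumes "finite A" "a \<in> A" "\<forall>I\<in>A. poly (g I) z \<ge> 0" "poly (g a) z = 1"
  shows "poly (\<Sum>I\<in>A. g I) z \<noteq> 0"
proof -
  have "poly (\<Sum>I\<in>A. g I) z = (\<Sum>I\<in>A. poly (g I) z)" by (simp add: poly_sum)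
  also have "\<dots> \<ge> poly (g a) z" using assms by (intro member_le_sum) auto
  finally show ?thesis using assms by simp
qed

lemma t1: "eval_ratfun (pp [:a:]) z = a"
  using conjunct2[OF reg_pp[of "[:a:]" z]] by simp

lemma t2: "eval_ratfun (pp [:0,1:]) z = z"
  using conjunct2[OF reg_pp[of "[:0,1:]" z]] by simp

lemma wsum_pp:
  "(\<Sum>I\<in>A. qvar ^ (k I) * rconst (h I)) = pp (\<Sum>I\<in>A. [:0,1:] ^ (k I) * [:h I:])"
  by (simp only: pp_sum pp_mult pp_pow rconst_pp)

lemma wsum_pp1:
  "(\<Sum>I\<in>A. qvar ^ (k I)) = pp (\<Sum>I\<in>A. [:0,1:] ^ (k I))"
  by (simp add: pp_sum pp_pow)

theorem lemma5p6:
  fixes P :: "'a::order set" and f :: "'a set \<Rightarrow> real"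
    and c :: ratfun and cp :: "'a \<Rightarrow> ratfun"
  assumes "finite P"
    and "\<forall>I\<in>order_ideals P. rconst (f I) = c + (\<Sum>p\<in>P. cp p * Tq P p I)"
  shows "\<forall>z::real. z \<ge> 0 \<longrightarrow>
           regular_at c z \<and> (\<forall>p\<in>P. regular_at (cp p) z) \<and>
           (\<forall>I\<in>order_ideals P. f I = eval_ratfun c z
              + (\<Sum>p\<in>P. eval_ratfun (cp p) z * (Tplus P p I - z * Tminus P p I)))"
proof (intro allI impI)
  fix z :: real assume z: "z \<ge> 0"
  note fin = assms(1) and H = assms(2)
  have finJ: "finite (order_ideals P)" using finite_ideals[OF fin] .
  have PJ: "P \<in> order_ideals P" by (simp add: order_ideals_def)
  have regc: "regular_at c z"
  proof -
    let ?A = "{I \<in> order_ideals P. I \<subseteq> P}"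
    have finA: "finite ?A" using finJ by simp
    have e: "c * pp (\<Sum>I\<in>?A. [:0,1:] ^ (card P - card I))
           = pp (\<Sum>I\<in>?A. [:0,1:] ^ (card P - card I) * [:f I:])"
      using weighted[OF fin PJ H] by (simp add: wsum_pp wsum_pp1)
    have nz: "poly (\<Sum>I\<in>?A. [:0,1:] ^ (card P - card I)) z \<noteq> 0"
      using z by (intro poly_ge1[OF finA, of P]) (auto simp: PJ)
    show ?thesis by (rule reg_div[OF e conjunct1[OF reg_pp] nz])
  qed
  have regcp: "regular_at (cp p) z" if pP: "p \<in> P" for p
  proof -
    define U where "U = {y \<in> P. \<not> p \<le> y}"
    let ?A = "{I \<in> order_ideals P. I \<subseteq> U}"
    let ?w = "\<lambda>I. qvar ^ (card U - card I)"
    have UJ: "U \<in> order_ideals P" unfolding U_def order_ideals_def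
      using order_trans by blast
    have finA: "finite ?A" using finJ by simp
    have PU: "P - U = insert p (P - U - {p})" using pP by (auto simp: U_def)
    have zero: "(\<Sum>I\<in>?A. ?w I * Tq P r I) = 0" if r: "r \<in> P - U - {p}" for r
    proof -
      have "Tq P r I = 0" if "I \<in> ?A" for I
      proof -
        have "r \<notin> I" "p \<in> P - I" "p < r" using that r pP by (auto simp: U_def order_ideals_def)
        then show ?thesis by (auto simp: Tq_alt)
      qed
      then show ?thesis by simp
    qed
    have onep: "(\<Sum>I\<in>?A. ?w I * Tq P p I) = (\<Sum>I\<in>?A. ?w I * rconst (Tplus P p I))"
    proof (intro sum.cong refl)
      fix I assume "I \<in> ?A"
      then have "p \<notin> I" by (auto simp: U_def)
      then show "?w I * Tq P p I = ?w I * rconst (Tplus P p I)"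
        by (simp add: Tq_def Tminus_def rconst01)
    qed
    have "(\<Sum>r\<in>P - U. cp r * (\<Sum>I\<in>?A. ?w I * Tq P r I)) = cp p * (\<Sum>I\<in>?A. ?w I * Tq P p I)"
      using fin zero by (subst PU, subst sum.insert) auto
    then have e0: "(\<Sum>I\<in>?A. ?w I * rconst (f I)) = c * (\<Sum>I\<in>?A. ?w I) + cp p * (\<Sum>I\<in>?A. ?w I * rconst (Tplus P p I))"
      using weighted[OF fin UJ H] onep by simp
    have e0': "pp (\<Sum>I\<in>?A. [:0,1:] ^ (card U - card I) * [:f I:]) = c * pp (\<Sum>I\<in>?A. [:0,1:] ^ (card U - card I)) + cp p * pp (\<Sum>I\<in>?A. [:0,1:] ^ (card U - card I) * [:Tplus P p I:])"
      using e0 unfolding wsum_pp wsum_pp1 .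
    have e: "cp p * pp (\<Sum>I\<in>?A. [:0,1:] ^ (card U - card I) * [:Tplus P p I:])
        = pp (\<Sum>I\<in>?A. [:0,1:] ^ (card U - card I) * [:f I:]) - c * pp (\<Sum>I\<in>?A. [:0,1:] ^ (card U - card I))"
      by (simp only: e0' add_diff_cancel_left')
    have r: "regular_at (pp (\<Sum>I\<in>?A. [:0,1:] ^ (card U - card I) * [:f I:]) - c * pp (\<Sum>I\<in>?A. [:0,1:] ^ (card U - card I))) z"
      using reg_diff[OF conjunct1[OF reg_pp] conjunct1[OF reg_mult[OF regc conjunct1[OF reg_pp]]]] by blast
    have tU: "Tplus P p U = 1" using pP by (auto simp: Tplus_def U_def)
    have tnn: "Tplus P p I \<ge> 0" for I by (simp add: Tplus_def)
    have nz: "poly (\<Sum>I\<in>?A. [:0,1:] ^ (card U - card I) * [:Tplus P p I:]) z \<noteq> 0"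
      using z tU tnn by (intro poly_ge1[OF finA, of U]) (auto simp: UJ)
    show ?thesis by (rule reg_div[OF e r nz])
  qed
  have regTq: "regular_at (Tq P p I) z \<and> eval_ratfun (Tq P p I) z = Tplus P p I - z * Tminus P p I" for p I
  proof -
    have e: "Tq P p I = pp [:Tplus P p I:] - pp [:0,1:] * pp [:Tminus P p I:]"
      unfolding Tq_def rconst_pp qvar_def pp_def ..
    note m0 = reg_mult[OF conjunct1[OF reg_pp[of "[:0,1:]" z]] conjunct1[OF reg_pp[of "[:Tminus P p I:]" z]]]
    have m: "regular_at (pp [:0,1:] * pp [:Tminus P p I:]) z \<and> eval_ratfun (pp [:0,1:] * pp [:Tminus P p I:]) z = z * Tminus P p I"
      using m0 unfolding t1 t2 .
    have d: "regular_at (pp [:Tplus P p I:] - pp [:0,1:] * pp [:Tminus P p I:]) z \<and> eval_ratfun (pp [:Tplus P p I:] - pp [:0,1:] * pp [:Tminus P p I:]) z = eval_ratfun (pp [:Tplus P p I:]) z - eval_ratfun (pp [:0,1:] * pp [:Tminus P p I:]) z"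
      by (rule reg_diff[OF conjunct1[OF reg_pp[of "[:Tplus P p I:]" z]] conjunct1[OF m]])
    note t = t1[of "Tplus P p I" z]
    have "eval_ratfun (Tq P p I) z = Tplus P p I - z * Tminus P p I"
      unfolding e conjunct2[OF d] t conjunct2[OF m] ..
    then show ?thesis using conjunct1[OF d] unfolding e by blast
  qed
  have evI: "f I = eval_ratfun c z + (\<Sum>p\<in>P. eval_ratfun (cp p) z * (Tplus P p I - z * Tminus P p I))"
    if I: "I \<in> order_ideals P" for I
  proof -
    have rs: "\<forall>p\<in>P. regular_at (cp p * Tq P p I) z \<and> eval_ratfun (cp p * Tq P p I) z = eval_ratfun (cp p) z * (Tplus P p I - z * Tminus P p I)"
      using reg_mult[OF regcp conjunct1[OF regTq]] regTq by simp
    have s: "regular_at (\<Sum>p\<in>P. cp p * Tq P p I) z \<and> eval_ratfun (\<Sum>p\<in>P. cp p * Tq P p I) z = (\<Sum>p\<in>P. eval_ratfun (cp p) z * (Tplus P p I - z * Tminus P p I))"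
      using reg_sum[of P "\<lambda>p. cp p * Tq P p I" z] rs by simp
    have "f I = eval_ratfun (rconst (f I)) z" using reg_pp[of "[:f I:]" z] by (simp add: rconst_pp)
    also have "\<dots> = eval_ratfun (c + (\<Sum>p\<in>P. cp p * Tq P p I)) z" using H I by simp
    also have "\<dots> = eval_ratfun c z + (\<Sum>p\<in>P. eval_ratfun (cp p) z * (Tplus P p I - z * Tminus P p I))"
      using reg_add[OF regc conjunct1[OF s]] s by simp
    finally show ?thesis .
  qed
  show "regular_at c z \<and> (\<forall>p\<in>P. regular_at (cp p) z) \<and>
           (\<forall>I\<in>order_ideals P. f I = eval_ratfun c z
              + (\<Sum>p\<in>P. eval_ratfun (cp p) z * (Tplus P p I - z * Tminus P p I)))"
    using regc regcp evI by blast
qed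

end
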